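(* With notation as in the context, the map $(r_0|_{\widetilde M})_*\oplus(r_1|_{\widetilde M})_*: H_2(\widetilde M)\to H_2(Z_0)\oplus H_2(Z_1)$ is an isomorphism (integral homology).
   Context: Give $\mathbf{R}^5$ the product cubical cell structure with integer vertices; $Z_0$ is its 2-skeleton, $u=e_1+\dots+e_5$, $Z_1=Z_0+u/2$. For $i=0,1$, $N(Z_i)$ is the closed $\ell^\infty$ $1/4$-neighborhood of $Z_i$; $N(Z_0)\cup N(Z_1)=\mathbf{R}^5$ and $N(Z_0)\cap N(Z_1)=\widetilde M$, the set of points at $\ell^\infty$-distance $1/4$ from both $Z_0$ and $Z_1$. Writing $I=[-1/4,1/4]$, for each $k$-cell $e^k\cong[0,1]^k$ of $Z_i$ ($k\le 2$) let $e^k_\circ\cong[1/4,3/4]^k$ be the concentric subcube and $B^k=e^k_\circ\times I^{5-k}$ its normal $1/4$-thickening; $N(Z_i)$ is the union of all $B^k$. The retraction $r_i: N(Z_i)\to Z_i$ is defined on each $B^k$ as the coordinate projection $B^k\to e^k_\circ$ followed by the scaling by factor $2$ about the center, $e^k_\circ\to e^k$; it is a $\mathbf{Z}^5$-equivariant deformation retraction. *)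

theory Defs
  imports "HOL-Analysis.Analysis" "HOL-Homology.Homology"
begin

text \<open>Z0: 2-skeleton of the integer cubical structure: points with at most 2 non-integer coordinates.\<close>
definition Z0 :: "(real^5) set" where
  "Z0 = {x. card {j. x $ j \<notin> \<int>} \<le> 2}"

definition uvec :: "real^5" where
  "uvec = (\<chi> j. 1)"

definition Z1 :: "(real^5) set" where
  "Z1 = (\<lambda>z. z + (1/2) *\<^sub>R uvec) ` Z0"

definition Nbhd :: "(real^5) set \<Rightarrow> (real^5) set" where
  "Nbhd Z = {x. \<exists>z\<in>Z. \<forall>j. \<bar>x $ j - z $ j\<bar> \<le> 1/4}"

definition Mtilde :: "(real^5) set" where
  "Mtilde = Nbhd Z0 \<inter> Nbhd Z1"

text \<open>Coordinatewise description of r_0: on a normal coordinate (within 1/4 of an integer n)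
  project to n; on a tangent coordinate t in [n+1/4, n+3/4] rescale by 2 about n+1/2.\<close>
definition rho :: "real \<Rightarrow> real" where
  "rho t = of_int \<lfloor>t\<rfloor> + max 0 (min 1 (2 * (t - of_int \<lfloor>t\<rfloor>) - 1/2))"

definition r0 :: "real^5 \<Rightarrow> real^5" where
  "r0 x = (\<chi> j. rho (x $ j))"

definition r1 :: "real^5 \<Rightarrow> real^5" where
  "r1 x = r0 (x - (1/2) *\<^sub>R uvec) + (1/2) *\<^sub>R uvec"

end

theory Submission
  imports Defs
begin


lemma floorcont_gen:
  fixes G :: "real \<Rightarrow> real"
  assumes cG: "continuous_on UNIV G" and G1: "G 1 = G 0 + 1"
  shows "continuous_on UNIV (\<lambda>t. of_int \<lfloor>t\<rfloor> + G (t - of_int \<lfloor>t\<rfloor>))"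
proof -
  let ?f = "\<lambda>t. of_int \<lfloor>t\<rfloor> + G (t - of_int \<lfloor>t\<rfloor>)"
  have piece: "continuous_on {of_int n .. of_int n + 1} ?f" for n :: int
  proof -
    have "continuous_on {of_int n .. of_int n + 1} (\<lambda>t. of_int n + G (t - of_int n))"
    proof -
      have "continuous_on {of_int n .. of_int n + 1} (\<lambda>t. G (t - of_int n))"
        by (rule continuous_on_compose2[OF cG]) (auto intro: continuous_intros)
      then show ?thesis by (intro continuous_intros)
    qed
    moreover have "?f t = of_int n + G (t - of_int n)" if "t \<in> {of_int n .. of_int n + 1}" for t
    proof (cases "t = of_int n + 1")
      case True
      then have "\<lfloor>t\<rfloor> = n + 1" by simp
      then show ?thesis using True G1 by simp
    next
      case False
      with that have "\<lfloor>t\<rfloor> = n" by (auto simp: floor_eq_iff)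
      then show ?thesis by simp
    qed
    ultimately show ?thesis using continuous_on_eq by (metis (no_types, lifting))
  qed
  show ?thesis
    unfolding continuous_on_eq_continuous_at[OF open_UNIV]
  proof
    fix x :: real
    let ?n = "\<lfloor>x\<rfloor>"
    have "{of_int ?n - 1 .. of_int ?n + 1 :: real} = {of_int (?n - 1) .. of_int (?n-1) + 1} \<union> {of_int ?n .. of_int ?n + 1}"
      by auto
    moreover have "continuous_on ({of_int (?n - 1) .. of_int (?n-1) + 1} \<union> {of_int ?n .. of_int ?n + 1}) ?f"
      by (intro continuous_on_closed_Un piece) auto
    ultimately have c: "continuous_on {of_int ?n - 1 <..< of_int ?n + 1} ?f"
      by (metis continuous_on_subset greaterThanLessThan_subseteq_atLeastAtMost_iff order_refl)
    have "x \<in> {of_int ?n - 1 <..< of_int ?n + 1}"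
      by simp linarith
    then show "isCont ?f x"
      using c continuous_on_eq_continuous_at open_greaterThanLessThan by blast
  qed
qed

lemma rho_alt: "rho t = of_int \<lfloor>t\<rfloor> + (\<lambda>f. max 0 (min 1 (2 * f - 1/2))) (t - of_int \<lfloor>t\<rfloor>)"
  by (simp add: rho_def)

lemma cont_rho: "continuous_on UNIV rho"
proof -
  have "continuous_on UNIV (\<lambda>t. of_int \<lfloor>t\<rfloor> + (\<lambda>f::real. max 0 (min 1 (2 * f - 1/2))) (t - of_int \<lfloor>t\<rfloor>))"
    by (rule floorcont_gen) (auto intro!: continuous_intros)
  then show ?thesis unfolding rho_alt[abs_def] .
qed

lemma rho_near: assumes "\<bar>s - of_int n\<bar> \<le> 1/4" shows "rho s = of_int n"
proof (cases "s \<ge> of_int n")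
  case True
  then have "\<lfloor>s\<rfloor> = n" using assms by (auto simp: floor_eq_iff abs_if)
  then show ?thesis using assms True by (auto simp: rho_def abs_if)
next
  case False
  then have "\<lfloor>s\<rfloor> = n - 1" using assms by (auto simp: floor_eq_iff abs_if)
  then show ?thesis using assms False by (auto simp: rho_def abs_if)
qed

definition S8 :: "real \<Rightarrow> real" where
  "S8 f = max (max (min (2*f) (1/4)) (min (2*f - 1/2) (3/4))) (2*f - 1)"

definition sg :: "real \<Rightarrow> real" where
  "sg t = of_int \<lfloor>t\<rfloor> + S8 (t - of_int \<lfloor>t\<rfloor>)"

lemma cont_sg: "continuous_on UNIV sg"
proof -
  have "continuous_on UNIV (\<lambda>t. of_int \<lfloor>t\<rfloor> + S8 (t - of_int \<lfloor>t\<rfloor>))"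
    by (rule floorcont_gen) (auto simp: S8_def intro!: continuous_intros)
  then show ?thesis unfolding sg_def[abs_def] .
qed

lemma sg_val: assumes "0 \<le> q" "q < 1" shows "sg (of_int n + q) = of_int n + S8 q"
proof -
  have "\<lfloor>of_int n + q\<rfloor> = n" using assms by (simp add: floor_eq_iff)
  then show ?thesis by (simp add: sg_def)
qed

lemma S8_mono: "a \<le> b \<Longrightarrow> S8 a \<le> S8 b"
  unfolding S8_def by linarith

lemma S8_range: "0 \<le> a \<Longrightarrow> a \<le> 1 \<Longrightarrow> 0 \<le> S8 a \<and> S8 a \<le> 1"
  unfolding S8_def by linarith

lemma sg_mono: assumes "a \<le> b" shows "sg a \<le> sg b"
proof (cases "\<lfloor>a\<rfloor> = \<lfloor>b\<rfloor>")
  case True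
  then show ?thesis using assms S8_mono[of "a - of_int \<lfloor>a\<rfloor>" "b - of_int \<lfloor>b\<rfloor>"]
    by (simp add: sg_def)
next
  case False
  then have "\<lfloor>a\<rfloor> + 1 \<le> \<lfloor>b\<rfloor>" using assms floor_mono[OF assms] by linarith
  then have "of_int \<lfloor>a\<rfloor> + 1 \<le> (of_int \<lfloor>b\<rfloor> :: real)" by linarith
  moreover have "0 \<le> a - of_int \<lfloor>a\<rfloor>" "a - of_int \<lfloor>a\<rfloor> \<le> 1"
      "0 \<le> b - of_int \<lfloor>b\<rfloor>" "b - of_int \<lfloor>b\<rfloor> \<le> 1"
    using of_int_floor_le[of a] real_of_int_floor_add_one_gt[of a]
      of_int_floor_le[of b] real_of_int_floor_add_one_gt[of b] by linarith+
  then have "S8 (a - of_int \<lfloor>a\<rfloor>) \<le> 1" "0 \<le> S8 (b - of_int \<lfloor>b\<rfloor>)"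
    using S8_range by blast+
  ultimately show ?thesis by (simp add: sg_def)
qed

lemma sg_I: assumes "\<bar>t - of_int n\<bar> \<le> 1/4" shows "\<bar>sg t - of_int n\<bar> \<le> 1/4"
proof -
  have e1: "sg (of_int (n - 1) + 3/4) = of_int n - 1/4"
    by (subst sg_val) (simp_all add: S8_def)
  have e2: "sg (of_int n + 1/4) = of_int n + 1/4"
    by (subst sg_val) (simp_all add: S8_def)
  have "sg (of_int (n - 1) + 3/4) \<le> sg t" "sg t \<le> sg (of_int n + 1/4)"
    using assms by (auto intro!: sg_mono simp: abs_if split: if_splits)
  then show ?thesis unfolding e1 e2 by (simp add: abs_if)
qed

lemma sg_J: assumes "\<bar>t - of_int n - 1/2\<bar> \<le> 3/8" shows "\<bar>sg t - of_int n - 1/2\<bar> \<le> 1/4"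
proof -
  have "sg (of_int n + 1/8) \<le> sg t" "sg t \<le> sg (of_int n + 7/8)"
    using assms by (auto intro!: sg_mono simp: abs_if split: if_splits)
  moreover have "sg (of_int n + 1/8) = of_int n + 1/4" "sg (of_int n + 7/8) = of_int n + 3/4"
    by (subst sg_val; simp add: S8_def)+
  ultimately show ?thesis by (simp add: abs_if)
qed



definition near :: "real \<Rightarrow> real \<Rightarrow> real \<Rightarrow> bool" where
  "near c r t \<longleftrightarrow> (\<exists>n::int. \<bar>t - of_int n - c\<bar> \<le> r)"
definition many :: "(real \<Rightarrow> bool) \<Rightarrow> (real^5) set" where
  "many P = {x. card {j. \<not> P (x$j)} \<le> 2}"
definition Zc :: "real \<Rightarrow> (real^5) set" where
  "Zc c = {z. card {j. z$j - c \<notin> \<int>} \<le> 2}"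
definition rc :: "real \<Rightarrow> real^5 \<Rightarrow> real^5" where
  "rc c x = (\<chi> j. rho (x$j - c) + c)"
definition sgv :: "real^5 \<Rightarrow> real^5" where
  "sgv x = (\<chi> j. sg (x$j))"

lemma card5_mono: "(\<And>j. P j \<Longrightarrow> Q j) \<Longrightarrow> card {j::5. \<not> P j} \<le> k \<Longrightarrow> card {j::5. \<not> Q j} \<le> k"
proof -
  assume h: "\<And>j. P j \<Longrightarrow> Q j" and k: "card {j::5. \<not> P j} \<le> k"
  have "{j. \<not> Q j} \<subseteq> {j. \<not> P j}" using h by blast
  then have "card {j::5. \<not> Q j} \<le> card {j::5. \<not> P j}" by (rule card_mono[OF finite])
  then show ?thesis using k by linarith
qed

lemma card5_mono2: assumes "card {j::5. \<not> P j} \<le> k" "\<And>j. P j \<Longrightarrow> Q j" shows "card {j::5. \<not> Q j} \<le> k"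
  by (rule card5_mono[OF assms(2,1)])

lemma Z0_eq: "Z0 = Zc 0" by (simp add: Z0_def Zc_def)

lemma Z1_eq: "Z1 = Zc (1/2)"
proof
  show "Z1 \<subseteq> Zc (1/2)"
    by (auto simp: Z1_def Z0_def Zc_def uvec_def)
  show "Zc (1/2) \<subseteq> Z1"
  proof
    fix z assume z: "z \<in> Zc (1/2)"
    have "z - (1/2) *\<^sub>R uvec \<in> Z0" using z by (simp add: Z0_def Zc_def uvec_def)
    moreover have "z = (z - (1/2) *\<^sub>R uvec) + (1/2) *\<^sub>R uvec" by simp
    ultimately show "z \<in> Z1" unfolding Z1_def by blast
  qed
qed

lemma r0_eq: "r0 = rc 0" by (simp add: r0_def rc_def fun_eq_iff)
lemma r1_eq: "r1 = rc (1/2)" by (simp add: r1_def r0_def rc_def fun_eq_iff uvec_def vec_eq_iff)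

lemma Nbhd_eq: "Nbhd (Zc c) = many (near c (1/4))"
proof
  show "Nbhd (Zc c) \<subseteq> many (near c (1/4))"
  proof
    fix x assume "x \<in> Nbhd (Zc c)"
    then obtain z where z: "z \<in> Zc c" and d: "\<And>j. \<bar>x $ j - z $ j\<bar> \<le> 1/4"
      by (auto simp: Nbhd_def)
    have "near c (1/4) (x$j)" if hj: "z$j - c \<in> \<int>" for j
    proof -
      obtain n where n: "z$j - c = of_int n" using hj Ints_cases by blast
      have e: "x$j - of_int n - c = x$j - z$j" using n by simp
      show ?thesis unfolding near_def
        by (intro exI[of _ n]) (simp only: e d)
    qed
    then have "card {j. \<not> near c (1/4) (x$j)} \<le> 2"
      by (rule card5_mono2[OF z[unfolded Zc_def mem_Collect_eq]])
    then show "x \<in> many (near c (1/4))" unfolding many_def by simp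
  qed
  show "many (near c (1/4)) \<subseteq> Nbhd (Zc c)"
  proof
    fix x assume x: "x \<in> many (near c (1/4))"
    define z where "z = (\<chi> j. if near c (1/4) (x$j) then of_int (SOME n::int. \<bar>x$j - of_int n - c\<bar> \<le> 1/4) + c else x$j)"
    have "z$j - c \<in> \<int>" if "near c (1/4) (x$j)" for j
      using that by (simp add: z_def)
    then have "card {j. z$j - c \<notin> \<int>} \<le> 2"
      by (rule card5_mono2[OF x[unfolded many_def mem_Collect_eq]])
    then have "z \<in> Zc c" unfolding Zc_def by simp
    moreover have "\<bar>x $ j - z $ j\<bar> \<le> 1/4" for j
    proof (cases "near c (1/4) (x$j)")
      case True
      then have "\<exists>n::int. \<bar>x$j - of_int n - c\<bar> \<le> 1/4" by (simp add: near_def)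
      from someI_ex[OF this] show ?thesis using True by (simp add: z_def algebra_simps)
    next
      case False
      then show ?thesis by (simp add: z_def)
    qed
    ultimately show "x \<in> Nbhd (Zc c)" unfolding Nbhd_def by blast
  qed
qed

lemma sl_homotopic:
  fixes f :: "real^5 \<Rightarrow> real^5"
  assumes cf: "continuous_on UNIV f"
    and inS: "\<And>t x. 0 \<le> t \<Longrightarrow> t \<le> 1 \<Longrightarrow> x \<in> S \<Longrightarrow> (1-t) *\<^sub>R f x + t *\<^sub>R x \<in> S"
    and P: "\<And>t. 0 \<le> t \<Longrightarrow> t \<le> 1 \<Longrightarrow> P (\<lambda>x. (1-t) *\<^sub>R f x + t *\<^sub>R x)"
  shows "homotopic_with P (top_of_set S) (top_of_set S) f id"
proof -
  let ?h = "\<lambda>y::real \<times> (real^5). (1 - fst y) *\<^sub>R f (snd y) + fst y *\<^sub>R snd y"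
  have c: "continuous_on ({0..1} \<times> S) ?h"
  proof -
    have "continuous_on ({0..1} \<times> S) (\<lambda>y::real \<times> (real^5). f (snd y))"
      by (rule continuous_on_compose2[OF cf continuous_on_snd]) auto
    then show ?thesis by (intro continuous_intros)
  qed
  have i: "?h \<in> ({0..1} \<times> S) \<rightarrow> S" using inS by auto
  show ?thesis unfolding homotopic_with_def
    by (rule exI[of _ ?h]) (use c i P in simp)
qed

lemma cont_rc: "continuous_on UNIV (rc c)"
proof -
  have "continuous_on UNIV (\<lambda>x::real^5. rho (x$j - c))" for j
    by (rule continuous_on_compose2[OF cont_rho]) (intro continuous_on_diff continuous_on_const continuous_on_component continuous_on_id | simp)+
  then show ?thesis unfolding rc_def[abs_def] by (intro continuous_on_vec_lambda continuous_on_add continuous_on_const)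
qed

lemma cont_sgv: "continuous_on UNIV sgv"
proof -
  have "continuous_on UNIV (\<lambda>x::real^5. sg (x$j))" for j
    by (rule continuous_on_compose2[OF cont_sg]) (intro continuous_on_diff continuous_on_const continuous_on_component continuous_on_id | simp)+
  then show ?thesis unfolding sgv_def[abs_def] by (intro continuous_on_vec_lambda)
qed

lemma rc_into: "x \<in> many (near c (1/4)) \<Longrightarrow> rc c x \<in> Zc c"
proof -
  assume x: "x \<in> many (near c (1/4))"
  have "(rc c x)$j - c \<in> \<int>" if nj: "near c (1/4) (x$j)" for j
  proof -
    obtain n where n0: "\<bar>x$j - of_int n - c\<bar> \<le> 1/4" using nj unfolding near_def by blast
    have e: "x$j - c - of_int n = x$j - of_int n - c" by simp
    have "\<bar>x$j - c - of_int n\<bar> \<le> 1/4" unfolding e by (rule n0)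
    then show ?thesis by (simp add: rc_def rho_near)
  qed
  then have "card {j. (rc c x)$j - c \<notin> \<int>} \<le> 2"
    by (rule card5_mono2[OF x[unfolded many_def mem_Collect_eq]])
  then show ?thesis unfolding Zc_def by simp
qed

lemma rc_hom_many: assumes x: "x \<in> many (near c (1/4))" "0 \<le> t" "t \<le> 1"
  shows "(1-t) *\<^sub>R rc c x + t *\<^sub>R x \<in> many (near c (1/4))"
proof -
  have "near c (1/4) (((1-t) *\<^sub>R rc c x + t *\<^sub>R x)$j)" if nj: "near c (1/4) (x$j)" for j
  proof -
    obtain n where n0: "\<bar>x$j - of_int n - c\<bar> \<le> 1/4" using nj unfolding near_def by blast
    have e: "x$j - c - of_int n = x$j - of_int n - c" by simp
    have n: "\<bar>x$j - c - of_int n\<bar> \<le> 1/4" unfolding e by (rule n0)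

    then have "rho (x$j - c) = of_int n" by (rule rho_near)
    then have "((1-t) *\<^sub>R rc c x + t *\<^sub>R x)$j - of_int n - c = t * (x$j - of_int n - c)"
      by (simp add: rc_def algebra_simps)
    moreover have "\<bar>t * (x$j - of_int n - c)\<bar> \<le> 1/4"
    proof -
      have "\<bar>t\<bar> * \<bar>x$j - of_int n - c\<bar> \<le> 1 * (1/4)"
        using n0 x(2,3) by (intro mult_mono) auto
      then show ?thesis by (simp add: abs_mult)
    qed
    ultimately show ?thesis unfolding near_def by metis
  qed
  then have "card {j. \<not> near c (1/4) (((1-t) *\<^sub>R rc c x + t *\<^sub>R x)$j)} \<le> 2"
    by (rule card5_mono2[OF x(1)[unfolded many_def mem_Collect_eq]])
  then show ?thesis unfolding many_def by simp
qed

lemma rc_hom_Z: assumes x: "x \<in> Zc c"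
  shows "(1-t) *\<^sub>R rc c x + t *\<^sub>R x \<in> Zc c"
proof -
  have "((1-t) *\<^sub>R rc c x + t *\<^sub>R x)$j - c \<in> \<int>" if hj: "x$j - c \<in> \<int>" for j
  proof -
    obtain n where n: "x$j - c = of_int n" using hj Ints_cases by blast
    then have "rho (x$j - c) = of_int n" by (simp add: rho_near)
    then have "((1-t) *\<^sub>R rc c x + t *\<^sub>R x)$j - c = of_int n"
      using n by (simp add: rc_def algebra_simps)
    then show ?thesis by simp
  qed
  then have "card {j. ((1-t) *\<^sub>R rc c x + t *\<^sub>R x)$j - c \<notin> \<int>} \<le> 2"
    by (rule card5_mono2[OF x[unfolded Zc_def mem_Collect_eq]])
  then show ?thesis unfolding Zc_def by simp
qed

lemma Zc_sub: "Zc c \<subseteq> many (near c (1/4))"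
proof
  fix x assume x: "x \<in> Zc c"
  have "near c (1/4) (x$j)" if hj: "x$j - c \<in> \<int>" for j
  proof -
    obtain n where n: "x$j - c = of_int n" using hj Ints_cases by blast
    then show ?thesis unfolding near_def by (intro exI[of _ n]) simp
  qed
  then have "card {j. \<not> near c (1/4) (x$j)} \<le> 2"
    by (rule card5_mono2[OF x[unfolded Zc_def mem_Collect_eq]])
  then show "x \<in> many (near c (1/4))" unfolding many_def by simp
qed

lemma iso_rc:
  "hom_induced p (top_of_set (many (near c (1/4)))) {} (top_of_set (Zc c)) {} (rc c)
   \<in> iso (homology_group p (top_of_set (many (near c (1/4))))) (homology_group p (top_of_set (Zc c)))"
proof (rule homotopy_equivalence_homology_group_isomorphism[where g=id])
  have c1: "continuous_on (many (near c (1/4))) (rc c)" by (rule continuous_on_subset[OF cont_rc]) simp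
  have i1: "rc c \<in> many (near c (1/4)) \<rightarrow> Zc c" using rc_into by blast
  show "continuous_map (top_of_set (many (near c (1/4)))) (top_of_set (Zc c)) (rc c)"
    using c1 i1 by simp
  have i2: "id \<in> Zc c \<rightarrow> many (near c (1/4))" using Zc_sub[of c] by auto
  show "continuous_map (top_of_set (Zc c)) (top_of_set (many (near c (1/4)))) id"
    using i2 by (simp add: continuous_on_id)
  have "homotopic_with (\<lambda>h. True) (top_of_set (many (near c (1/4)))) (top_of_set (many (near c (1/4)))) (rc c) id"
    by (rule sl_homotopic[OF cont_rc]) (simp_all add: rc_hom_many)
  then show "homotopic_with (\<lambda>h. True) (top_of_set (many (near c (1/4)))) (top_of_set (many (near c (1/4)))) (id \<circ> rc c) id"
    by simp
  have "homotopic_with (\<lambda>h. True) (top_of_set (Zc c)) (top_of_set (Zc c)) (rc c) id"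
    by (rule sl_homotopic[OF cont_rc]) (simp_all add: rc_hom_Z)
  then show "homotopic_with (\<lambda>h. True) (top_of_set (Zc c)) (top_of_set (Zc c)) (rc c \<circ> id) id"
    by simp
qed



definition AA :: "(real^5) set" where "AA = many (near 0 (1/4))"
definition BB :: "(real^5) set" where "BB = many (near (1/2) (1/4))"
definition BB' :: "(real^5) set" where "BB' = many (near (1/2) (3/8))"

lemma near_mono: "r \<le> r' \<Longrightarrow> near c r t \<Longrightarrow> near c r' t"
  unfolding near_def by (meson order_trans)

lemma sgv_nth [simp]: "sgv x $ j = sg (x$j)" by (simp add: sgv_def)

lemma conv_abs:
  fixes a b m r \<tau> :: real
  assumes "\<bar>a - m\<bar> \<le> r" "\<bar>b - m\<bar> \<le> r" "0 \<le> \<tau>" "\<tau> \<le> 1"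
  shows "\<bar>(1-\<tau>)*b + \<tau>*a - m\<bar> \<le> r"
proof -
  have e: "(1-\<tau>)*b + \<tau>*a - m = (1-\<tau>)*(b-m) + \<tau>*(a-m)" by (simp add: algebra_simps)
  have "\<bar>(1-\<tau>)*(b-m)\<bar> \<le> (1-\<tau>)*r"
    using assms by (simp add: abs_mult mult_left_mono)
  moreover have "\<bar>\<tau>*(a-m)\<bar> \<le> \<tau>*r"
    using assms by (simp add: abs_mult mult_left_mono)
  ultimately have "\<bar>(1-\<tau>)*(b-m) + \<tau>*(a-m)\<bar> \<le> (1-\<tau>)*r + \<tau>*r"
    by (meson abs_triangle_ineq add_mono order_trans)
  then show ?thesis unfolding e by (simp add: algebra_simps)
qed

lemma sg_nearI: assumes "near 0 (1/4) t" "0 \<le> \<tau>" "\<tau> \<le> 1"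
  shows "near 0 (1/4) ((1-\<tau>) * sg t + \<tau> * t)"
proof -
  obtain n where n: "\<bar>t - of_int n\<bar> \<le> 1/4" using assms(1) unfolding near_def by auto
  have "\<bar>sg t - of_int n\<bar> \<le> 1/4" by (rule sg_I[OF n])
  then have "\<bar>(1-\<tau>) * sg t + \<tau> * t - of_int n\<bar> \<le> 1/4"
    by (rule conv_abs[OF n _ assms(2,3)])
  then show ?thesis unfolding near_def by (intro exI[of _ n]) simp
qed

lemma sg_nearJ_aux: assumes "near (1/2) (3/8) t"
  obtains n where "\<bar>t - (of_int n + 1/2)\<bar> \<le> 3/8" "\<bar>sg t - (of_int n + 1/2)\<bar> \<le> 1/4"
proof -
  obtain n where n: "\<bar>t - of_int n - 1/2\<bar> \<le> 3/8" using assms(1) unfolding near_def by auto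
  have "\<bar>sg t - of_int n - 1/2\<bar> \<le> 1/4" by (rule sg_J[OF n])
  with n show ?thesis using that by (simp add: algebra_simps)
qed

lemma sg_nearJ: assumes "near (1/2) (3/8) t" "0 \<le> \<tau>" "\<tau> \<le> 1"
  shows "near (1/2) (3/8) ((1-\<tau>) * sg t + \<tau> * t)"
proof -
  obtain n where n: "\<bar>t - (of_int n + 1/2)\<bar> \<le> 3/8" "\<bar>sg t - (of_int n + 1/2)\<bar> \<le> 1/4"
    using sg_nearJ_aux[OF assms(1)] by blast
  have "\<bar>sg t - (of_int n + 1/2)\<bar> \<le> 3/8" using n(2) by simp
  then have "\<bar>(1-\<tau>) * sg t + \<tau> * t - (of_int n + 1/2)\<bar> \<le> 3/8"
    by (rule conv_abs[OF n(1) _ assms(2,3)])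
  then show ?thesis unfolding near_def by (intro exI[of _ n]) (simp add: algebra_simps)
qed

lemma sg_nearK: assumes "near (1/2) (1/4) t" "0 \<le> \<tau>" "\<tau> \<le> 1"
  shows "near (1/2) (1/4) ((1-\<tau>) * sg t + \<tau> * t)"
proof -
  have "near (1/2) (3/8) t" using assms(1) by (rule near_mono[rotated]) simp
  then obtain n where n: "\<bar>t - (of_int n + 1/2)\<bar> \<le> 3/8" "\<bar>sg t - (of_int n + 1/2)\<bar> \<le> 1/4"
    using sg_nearJ_aux by blast
  obtain m where m: "\<bar>t - of_int m - 1/2\<bar> \<le> 1/4" using assms(1) unfolding near_def by auto
  have "m = n"
  proof -
    have "of_int m < (of_int n + 1 :: real)" "of_int n < (of_int m + 1 :: real)"
      using n(1) m unfolding abs_le_iff by linarith+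
    then have "m < n + 1" "n < m + 1" by linarith+
    then show ?thesis by linarith
  qed
  then have m': "\<bar>t - (of_int n + 1/2)\<bar> \<le> 1/4" using m by (simp add: algebra_simps)
  have "\<bar>(1-\<tau>) * sg t + \<tau> * t - (of_int n + 1/2)\<bar> \<le> 1/4"
    by (rule conv_abs[OF m' n(2) assms(2,3)])
  then show ?thesis unfolding near_def by (intro exI[of _ n]) (simp add: algebra_simps)
qed

lemma sg_nearJK: assumes "near (1/2) (3/8) t" shows "near (1/2) (1/4) (sg t)"
proof -
  obtain n where n: "\<bar>t - (of_int n + 1/2)\<bar> \<le> 3/8" "\<bar>sg t - (of_int n + 1/2)\<bar> \<le> 1/4"
    using sg_nearJ_aux[OF assms(1)] by blast
  then show ?thesis unfolding near_def by (intro exI[of _ n]) (simp add: algebra_simps)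
qed

lemma many_map: "x \<in> many P \<Longrightarrow> (\<And>j. P (x$j) \<Longrightarrow> Q (y$j)) \<Longrightarrow> y \<in> many Q"
  unfolding many_def mem_Collect_eq by (rule card5_mono2)

lemma sgv_comp: "((1-\<tau>) *\<^sub>R sgv x + \<tau> *\<^sub>R x) $ j = (1-\<tau>) * sg (x$j) + \<tau> * x$j"
  by (simp add: sgv_def)

lemma hA: "x \<in> AA \<Longrightarrow> 0 \<le> \<tau> \<Longrightarrow> \<tau> \<le> 1 \<Longrightarrow> (1-\<tau>) *\<^sub>R sgv x + \<tau> *\<^sub>R x \<in> AA"
  unfolding AA_def by (erule many_map) (auto intro: sg_nearI)
lemma hB: "x \<in> BB \<Longrightarrow> 0 \<le> \<tau> \<Longrightarrow> \<tau> \<le> 1 \<Longrightarrow> (1-\<tau>) *\<^sub>R sgv x + \<tau> *\<^sub>R x \<in> BB"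
  unfolding BB_def by (erule many_map) (auto intro: sg_nearK)
lemma hB': "x \<in> BB' \<Longrightarrow> 0 \<le> \<tau> \<Longrightarrow> \<tau> \<le> 1 \<Longrightarrow> (1-\<tau>) *\<^sub>R sgv x + \<tau> *\<^sub>R x \<in> BB'"
  unfolding BB'_def by (erule many_map) (auto intro: sg_nearJ)
lemma sgv_A: "x \<in> AA \<Longrightarrow> sgv x \<in> AA"
  using hA[of x 0] by simp
lemma sgv_B': "x \<in> BB' \<Longrightarrow> sgv x \<in> BB"
  unfolding BB_def BB'_def by (erule many_map) (simp add: sgv_def sg_nearJK)
lemma BB_sub: "BB \<subseteq> BB'"
proof
  fix x assume "x \<in> BB"
  then show "x \<in> BB'" unfolding BB_def BB'_def
    by (rule many_map) (erule near_mono[rotated], simp)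
qed

lemma I1: "hom_induced p euclidean BB euclidean BB' id
   \<in> iso (relative_homology_group p euclidean BB) (relative_homology_group p euclidean BB')"
proof (rule homotopy_equivalence_relative_homology_group_isomorphism[where g=sgv])
  show "continuous_map euclidean euclidean id" by simp
  show "id \<in> BB \<rightarrow> BB'" using BB_sub by auto
  show "continuous_map euclidean euclidean sgv" using cont_sgv by simp
  show "sgv \<in> BB' \<rightarrow> BB" using sgv_B' by blast
  have "homotopic_with (\<lambda>h. h \<in> BB \<rightarrow> BB) (top_of_set UNIV) (top_of_set UNIV) sgv id"
    by (rule sl_homotopic[OF cont_sgv]) (auto intro: hB)
  then show "homotopic_with (\<lambda>h. h \<in> BB \<rightarrow> BB) euclidean euclidean (sgv \<circ> id) id" by simp
  have "homotopic_with (\<lambda>h. h \<in> BB' \<rightarrow> BB') (top_of_set UNIV) (top_of_set UNIV) sgv id"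
    by (rule sl_homotopic[OF cont_sgv]) (auto intro: hB')
  then show "homotopic_with (\<lambda>h. h \<in> BB' \<rightarrow> BB') euclidean euclidean (id \<circ> sgv) id" by simp
qed

lemma I2: "hom_induced p (top_of_set AA) (AA \<inter> BB) (top_of_set AA) (AA \<inter> BB') id
   \<in> iso (relative_homology_group p (top_of_set AA) (AA \<inter> BB)) (relative_homology_group p (top_of_set AA) (AA \<inter> BB'))"
proof (rule homotopy_equivalence_relative_homology_group_isomorphism[where g=sgv])
  show "continuous_map (top_of_set AA) (top_of_set AA) id" by simp
  show "id \<in> AA \<inter> BB \<rightarrow> AA \<inter> BB'" using BB_sub by auto
  have "continuous_on AA sgv" by (rule continuous_on_subset[OF cont_sgv]) simp
  moreover have "sgv \<in> AA \<rightarrow> AA" using sgv_A by blast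
  ultimately show "continuous_map (top_of_set AA) (top_of_set AA) sgv" by simp
  show "sgv \<in> AA \<inter> BB' \<rightarrow> AA \<inter> BB" using sgv_B' sgv_A by blast
  have "homotopic_with (\<lambda>h. h \<in> AA \<inter> BB \<rightarrow> AA \<inter> BB) (top_of_set AA) (top_of_set AA) sgv id"
    by (rule sl_homotopic[OF cont_sgv]) (auto intro: hA hB)
  then show "homotopic_with (\<lambda>h. h \<in> AA \<inter> BB \<rightarrow> AA \<inter> BB) (top_of_set AA) (top_of_set AA) (sgv \<circ> id) id" by simp
  have "homotopic_with (\<lambda>h. h \<in> AA \<inter> BB' \<rightarrow> AA \<inter> BB') (top_of_set AA) (top_of_set AA) sgv id"
    by (rule sl_homotopic[OF cont_sgv]) (auto intro: hA hB')
  then show "homotopic_with (\<lambda>h. h \<in> AA \<inter> BB' \<rightarrow> AA \<inter> BB') (top_of_set AA) (top_of_set AA) (id \<circ> sgv) id" by simp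
qed



lemma exact3_kernel:
  assumes "exact_seq ([G3, G2, G1], [f2, f1])"
  shows "kernel G2 G3 f2 = f1 ` carrier G1"
  using assms by simp

lemma mv_chase:
  fixes X :: "'a topology" and A B :: "'a set"
  assumes t2: "trivial_group (homology_group 2 X)" and t3: "trivial_group (homology_group 3 X)"
    and E2: "inj_on (hom_induced 2 (subtopology X A) (A\<inter>B) X B id) (carrier (relative_homology_group 2 (subtopology X A) (A\<inter>B)))"
    and E3: "bij_betw (hom_induced 3 (subtopology X A) (A\<inter>B) X B id) (carrier (relative_homology_group 3 (subtopology X A) (A\<inter>B))) (carrier (relative_homology_group 3 X B))"
  shows "(\<lambda>a. (hom_induced 2 (subtopology X (A\<inter>B)) {} (subtopology X A) {} id a,
               hom_induced 2 (subtopology X (A\<inter>B)) {} (subtopology X B) {} id a))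
     \<in> iso (homology_group 2 (subtopology X (A\<inter>B))) (homology_group 2 (subtopology X A) \<times>\<times> homology_group 2 (subtopology X B))"
proof -
  define C where "C = A \<inter> B"
  define G where "G = homology_group 2 (subtopology X C)"
  define HA where "HA = homology_group 2 (subtopology X A)"
  define HB where "HB = homology_group 2 (subtopology X B)"
  define iA where "iA = hom_induced 2 (subtopology X C) {} (subtopology X A) {} id"
  define iB where "iB = hom_induced 2 (subtopology X C) {} (subtopology X B) {} id"
  define R3 where "R3 = relative_homology_group 3 (subtopology X A) C"
  define Q3 where "Q3 = relative_homology_group 3 X B"
  define R2 where "R2 = relative_homology_group 2 (subtopology X A) C"
  define Q2 where "Q2 = relative_homology_group 2 X B"
  define e3 where "e3 = hom_induced 3 (subtopology X A) C X B id"
  define e2 where "e2 = hom_induced 2 (subtopology X A) C X B id"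
  define d1 where "d1 = hom_boundary 3 (subtopology X A) C"
  define d2 where "d2 = hom_boundary 3 X B"
  define jA where "jA = hom_induced 2 (subtopology X A) {} (subtopology X A) C id"
  have subC: "subtopology (subtopology X A) C = subtopology X C"
    by (simp add: subtopology_subtopology C_def Int_absorb1)
  have grp: "group G" "group HA" "group HB" "group R3" "group Q3" "group R2" "group Q2"
    by (simp_all add: G_def HA_def HB_def R3_def Q3_def R2_def Q2_def)
  have cG: "comm_group HB" by (simp add: HB_def abelian_homology_group)
  have cGG: "comm_group G" by (simp add: G_def abelian_homology_group)
  have hiA: "iA \<in> hom G HA" by (simp add: iA_def G_def HA_def hom_induced_hom)
  have hiB: "iB \<in> hom G HB" by (simp add: iB_def G_def HB_def hom_induced_hom)
  have he3: "e3 \<in> hom R3 Q3" by (simp add: e3_def R3_def Q3_def hom_induced_hom)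
  have he2: "e2 \<in> hom R2 Q2" by (simp add: e2_def R2_def Q2_def hom_induced_hom)
  have hd1: "d1 \<in> hom R3 G"
    using hom_boundary_hom[of 3 "subtopology X A" C] by (simp add: d1_def R3_def G_def subC)
  have hd2: "d2 \<in> hom Q3 HB"
    using hom_boundary_hom[of 3 X B] by (simp add: d2_def Q3_def HB_def)
  have hjA: "jA \<in> hom HA R2" by (simp add: jA_def HA_def R2_def hom_induced_hom)
  have F1: "kernel G HA iA = d1 ` carrier R3"
  proof -
    have "exact_seq ([homology_group (3-1) (subtopology X A), homology_group (3-1) (subtopology (subtopology X A) C), relative_homology_group 3 (subtopology X A) C],
              [hom_induced (3-1) (subtopology (subtopology X A) C) {} (subtopology X A) {} id, hom_boundary 3 (subtopology X A) C])"
      by (rule homology_exactness_axiom_2)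
    then show ?thesis unfolding G_def HA_def iA_def d1_def R3_def subC by simp
  qed
  have F2: "kernel HA R2 jA = iA ` carrier G"
  proof -
    have "exact_seq ([relative_homology_group 2 (subtopology X A) C, homology_group 2 (subtopology X A), homology_group 2 (subtopology (subtopology X A) C)],
              [hom_induced 2 (subtopology X A) {} (subtopology X A) C id, hom_induced 2 (subtopology (subtopology X A) C) {} (subtopology X A) {} id])"
      by (rule homology_exactness_axiom_3)
    then show ?thesis unfolding G_def HA_def iA_def jA_def R2_def subC by simp
  qed
  have F3: "kernel Q3 HB d2 = {\<one>\<^bsub>Q3\<^esub>}"
  proof -
    have "exact_seq ([homology_group (3-1) (subtopology X B), relative_homology_group 3 X B, homology_group 3 X],
              [hom_boundary 3 X B, hom_induced 3 X {} X B id])"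
      by (rule homology_exactness_axiom_1)
    then have "kernel Q3 HB d2 = hom_induced 3 X {} X B id ` carrier (homology_group 3 X)"
      unfolding Q3_def HB_def d2_def by simp
    also have "\<dots> = {\<one>\<^bsub>Q3\<^esub>}"
      using t3 hom_one[OF hom_induced_hom[of 3 X "{}" X B id]]
      by (simp add: trivial_group_def Q3_def)
    finally show ?thesis .
  qed
  have F4: "carrier HB = d2 ` carrier Q3"
  proof -
    have "exact_seq ([homology_group (3-1) X, homology_group (3-1) (subtopology X B), relative_homology_group 3 X B],
              [hom_induced (3-1) (subtopology X B) {} X {} id, hom_boundary 3 X B])"
      by (rule homology_exactness_axiom_2)
    then have "kernel HB (homology_group 2 X) (hom_induced 2 (subtopology X B) {} X {} id) = d2 ` carrier Q3"
      unfolding Q3_def HB_def d2_def by simp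
    moreover have "kernel HB (homology_group 2 X) (hom_induced 2 (subtopology X B) {} X {} id) = carrier HB"
      using t2 hom_induced_carrier[of 2 "subtopology X B" "{}" X "{}" id]
      by (auto simp: kernel_def trivial_group_def)
    ultimately show ?thesis by simp
  qed
  have N: "d2 (e3 c) = iB (d1 c)" for c
  proof -
    have "hom_boundary 3 X B \<circ> hom_induced 3 (subtopology X A) C X B id
       = hom_induced (3 - 1) (subtopology (subtopology X A) C) {} (subtopology X B) {} id \<circ> hom_boundary 3 (subtopology X A) C"
      by (rule naturality_hom_induced) (auto simp: C_def continuous_map_from_subtopology)
    then show ?thesis unfolding d2_def e3_def iB_def d1_def subC by (simp add: fun_eq_iff)
  qed
  have CM: "e2 (jA \<alpha>) = \<one>\<^bsub>Q2\<^esub>" if "\<alpha> \<in> carrier HA" for \<alpha>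
  proof -
    have "e2 (jA \<alpha>) = hom_induced 2 (subtopology X A) {} X B id \<alpha>"
      unfolding e2_def jA_def
      by (subst hom_induced_compose') (auto simp: continuous_map_from_subtopology C_def)
    also have "\<dots> = hom_induced 2 X {} X B id (hom_induced 2 (subtopology X A) {} X {} id \<alpha>)"
      by (subst hom_induced_compose') (auto simp: continuous_map_from_subtopology)
    also have "hom_induced 2 (subtopology X A) {} X {} id \<alpha> = \<one>\<^bsub>homology_group 2 X\<^esub>"
      using t2 hom_induced_carrier[of 2 "subtopology X A" "{}" X "{}" id \<alpha>]
      by (auto simp: trivial_group_def)
    also have "hom_induced 2 X {} X B id \<one>\<^bsub>homology_group 2 X\<^esub> = \<one>\<^bsub>Q2\<^esub>"
      unfolding Q2_def by (rule hom_one[OF hom_induced_hom]) simp_all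
    finally show ?thesis .
  qed
  have e2inj: "inj_on e2 (carrier R2)" using E2 unfolding e2_def R2_def C_def .
  have e3bij: "bij_betw e3 (carrier R3) (carrier Q3)" using E3 unfolding e3_def R3_def Q3_def C_def .
  define \<phi> where "\<phi> = (\<lambda>a. (iA a, iB a))"
  have hphi: "\<phi> \<in> hom G (HA \<times>\<times> HB)" unfolding \<phi>_def using hiA hiB by (simp add: hom_paired)
  have ker: "a = \<one>\<^bsub>G\<^esub>" if a: "a \<in> carrier G" "iA a = \<one>\<^bsub>HA\<^esub>" "iB a = \<one>\<^bsub>HB\<^esub>" for a
  proof -
    have "a \<in> kernel G HA iA" using a by (simp add: kernel_def)
    then obtain c where c: "c \<in> carrier R3" "a = d1 c" using F1 by auto
    have "d2 (e3 c) = \<one>\<^bsub>HB\<^esub>" using N a c by simp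
    moreover have "e3 c \<in> carrier Q3" using he3 c by (simp add: hom_in_carrier)
    ultimately have "e3 c \<in> kernel Q3 HB d2" by (simp add: kernel_def)
    then have "e3 c = \<one>\<^bsub>Q3\<^esub>" using F3 by simp
    also have "\<dots> = e3 \<one>\<^bsub>R3\<^esub>" using hom_one[OF he3 grp(4,5)] by simp
    finally have "c = \<one>\<^bsub>R3\<^esub>"
      using e3bij c monoid.one_closed[OF group.is_monoid[OF grp(4)]] by (auto simp: bij_betw_def inj_on_def)
    then show ?thesis using c hom_one[OF hd1 grp(4,1)] by simp
  qed
  have inj: "inj_on \<phi> (carrier G)"
  proof -
    have gh: "group_hom G (HA \<times>\<times> HB) \<phi>"
      using hphi grp by (simp add: group_hom_def group_hom_axioms_def DirProd_group)
    have "kernel G (HA \<times>\<times> HB) \<phi> = {\<one>\<^bsub>G\<^esub>}"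
    proof
      show "kernel G (HA \<times>\<times> HB) \<phi> \<subseteq> {\<one>\<^bsub>G\<^esub>}"
        using ker by (auto simp: kernel_def \<phi>_def)
      show "{\<one>\<^bsub>G\<^esub>} \<subseteq> kernel G (HA \<times>\<times> HB) \<phi>"
        using group_hom.hom_one[OF gh] monoid.one_closed[OF group.is_monoid[OF grp(1)]] by (auto simp: kernel_def)
    qed
    then show ?thesis using group_hom.inj_iff_trivial_ker[OF gh] by simp
  qed
  have surj: "\<phi> ` carrier G = carrier HA \<times> carrier HB"
  proof
    show "\<phi> ` carrier G \<subseteq> carrier HA \<times> carrier HB"
      using hom_carrier[OF hphi] by simp
    show "carrier HA \<times> carrier HB \<subseteq> \<phi> ` carrier G"
    proof (clarify)
      fix \<alpha> \<beta> assume \<alpha>: "\<alpha> \<in> carrier HA" and \<beta>: "\<beta> \<in> carrier HB"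
      have "jA \<alpha> \<in> carrier R2" using hjA \<alpha> by (simp add: hom_in_carrier)
      moreover have "e2 (jA \<alpha>) = e2 \<one>\<^bsub>R2\<^esub>" using CM[OF \<alpha>] hom_one[OF he2 grp(6,7)] by simp
      ultimately have "jA \<alpha> = \<one>\<^bsub>R2\<^esub>"
        using e2inj monoid.one_closed[OF group.is_monoid[OF grp(6)]] by (auto simp: inj_on_def)
      then have "\<alpha> \<in> kernel HA R2 jA" using \<alpha> by (simp add: kernel_def)
      then obtain a1 where a1: "a1 \<in> carrier G" "\<alpha> = iA a1" using F2 by auto
      have iBa1: "iB a1 \<in> carrier HB" using hiB a1 by (simp add: hom_in_carrier)
      define \<beta>' where "\<beta>' = \<beta> \<otimes>\<^bsub>HB\<^esub> inv\<^bsub>HB\<^esub> (iB a1)"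
      have \<beta>'c: "\<beta>' \<in> carrier HB" unfolding \<beta>'_def
        by (intro monoid.m_closed[OF group.is_monoid[OF grp(3)]] group.inv_closed[OF grp(3)] \<beta> iBa1)
      then obtain d where d: "d \<in> carrier Q3" "\<beta>' = d2 d" using F4 by auto
      then obtain c where c: "c \<in> carrier R3" "d = e3 c" using e3bij by (auto simp: bij_betw_def)
      define a2 where "a2 = d1 c"
      have a2c: "a2 \<in> carrier G" unfolding a2_def using hd1 c by (simp add: hom_in_carrier)
      have "a2 \<in> kernel G HA iA" using F1 c unfolding a2_def by auto
      then have iAa2: "iA a2 = \<one>\<^bsub>HA\<^esub>" by (simp add: kernel_def)
      have iBa2: "iB a2 = \<beta>'" unfolding a2_def using N d c by simp
      define a where "a = a1 \<otimes>\<^bsub>G\<^esub> a2"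
      have ac: "a \<in> carrier G" unfolding a_def
        by (intro monoid.m_closed[OF group.is_monoid[OF grp(1)]] a1(1) a2c)
      have "iA a = \<alpha>"
        unfolding a_def using hom_mult[OF hiA a1(1) a2c] iAa2 a1 hiA grp(2)
        by (simp add: hom_in_carrier group.is_monoid monoid.r_one)
      moreover have "iB a = \<beta>"
      proof -
        interpret HBc: comm_group HB by (rule cG)
        have "iB a = iB a1 \<otimes>\<^bsub>HB\<^esub> (\<beta> \<otimes>\<^bsub>HB\<^esub> inv\<^bsub>HB\<^esub> (iB a1))"
          unfolding a_def using hom_mult[OF hiB a1(1) a2c] iBa2 by (simp add: \<beta>'_def)
        also have "\<dots> = \<beta> \<otimes>\<^bsub>HB\<^esub> (iB a1 \<otimes>\<^bsub>HB\<^esub> inv\<^bsub>HB\<^esub> (iB a1))"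
          using \<beta> iBa1 by (simp add: HBc.m_lcomm)
        also have "\<dots> = \<beta>" using \<beta> iBa1 by simp
        finally show ?thesis .
      qed
      ultimately show "(\<alpha>, \<beta>) \<in> \<phi> ` carrier G" unfolding \<phi>_def using ac by force
    qed
  qed
  have "\<phi> \<in> iso G (HA \<times>\<times> HB)"
    using hphi inj surj by (simp add: iso_def bij_betw_def)
  then show ?thesis unfolding \<phi>_def G_def HA_def HB_def iA_def iB_def C_def .
qed



definition KK :: "(real^5) set" where
  "KK = (\<Union>J\<in>{J::5 set. 3 \<le> card J}. \<Inter>j\<in>J. {x. \<forall>n::int. 1/4 \<le> \<bar>x$j - of_int n\<bar>})"
definition Oset :: "(real^5) set" where
  "Oset = (\<Union>J\<in>{J::5 set. 3 \<le> card J}. \<Inter>j\<in>J. {x. \<exists>n::int. \<bar>x$j - of_int n - 1/2\<bar> < 3/8})"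

lemma cont_comp_abs: "continuous_on UNIV (\<lambda>x::real^5. \<bar>x$j - a\<bar>)"
  by (intro continuous_on_rabs continuous_on_diff continuous_on_const continuous_on_component continuous_on_id)

lemma closed_KK: "closed KK"
  unfolding KK_def
proof (rule closed_UN)
  show "finite {J::5 set. 3 \<le> card J}" by simp
  show "\<forall>J\<in>{J::5 set. 3 \<le> card J}. closed (\<Inter>j\<in>J. {x::real^5. \<forall>n::int. 1/4 \<le> \<bar>x$j - of_int n\<bar>})"
  proof (intro ballI closed_INT)
    fix J :: "5 set" and j :: 5
    show "closed {x::real^5. \<forall>n::int. 1/4 \<le> \<bar>x$j - of_int n\<bar>}"
      by (intro closed_Collect_all closed_Collect_le continuous_on_const cont_comp_abs)
  qed
qed

lemma open_Oset: "open Oset"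
  unfolding Oset_def
proof (intro open_UN ballI open_INT)
  fix J :: "5 set" and j :: 5
  show "finite J" by simp
  show "open {x::real^5. \<exists>n::int. \<bar>x$j - of_int n - 1/2\<bar> < 3/8}"
  proof (intro open_Collect_ex open_Collect_less continuous_on_const)
    fix n :: int
    show "continuous_on UNIV (\<lambda>x::real^5. \<bar>x$j - of_int n - 1/2\<bar>)"
      using cont_comp_abs[of j "of_int n + 1/2"] by (simp add: algebra_simps)
  qed
qed

lemma compA_KK: "- AA \<subseteq> KK"
proof
  fix x assume "x \<in> - AA"
  then have c: "\<not> card {j. \<not> near 0 (1/4) (x$j)} \<le> 2" by (simp add: AA_def many_def)
  let ?J = "{j. \<not> near 0 (1/4) (x$j)}"
  have "3 \<le> card ?J" using c by simp
  moreover have "\<forall>n::int. 1/4 \<le> \<bar>x$j - of_int n\<bar>" if "j \<in> ?J" for j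
    using that by (auto simp: near_def not_le less_imp_le)
  ultimately show "x \<in> KK" unfolding KK_def by blast
qed

lemma KK_Oset: "KK \<subseteq> Oset"
proof
  fix x assume "x \<in> KK"
  then obtain J where J: "3 \<le> card J" "\<And>j n. j \<in> J \<Longrightarrow> 1/4 \<le> \<bar>x$j - of_int (n::int)\<bar>"
    unfolding KK_def by blast
  have "\<exists>n::int. \<bar>x$j - of_int n - 1/2\<bar> < 3/8" if "j \<in> J" for j
  proof (intro exI)
    let ?t = "x$j"
    have a: "1/4 \<le> \<bar>?t - of_int \<lfloor>?t\<rfloor>\<bar>" "1/4 \<le> \<bar>?t - of_int (\<lfloor>?t\<rfloor> + 1)\<bar>" using J(2)[OF that] by blast+
    have b: "of_int \<lfloor>?t\<rfloor> \<le> ?t" "?t < of_int \<lfloor>?t\<rfloor> + 1"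
      using of_int_floor_le real_of_int_floor_add_one_gt by blast+
    show "\<bar>?t - of_int \<lfloor>?t\<rfloor> - 1/2\<bar> < 3/8" using a b unfolding abs_le_iff abs_less_iff
      by (simp add: abs_if split: if_splits) linarith?
  qed
  then show "x \<in> Oset" unfolding Oset_def using J(1) by blast
qed

lemma Oset_BB': "Oset \<subseteq> BB'"
proof
  fix x assume "x \<in> Oset"
  then obtain J where J: "3 \<le> card J" "\<And>j. j \<in> J \<Longrightarrow> \<exists>n::int. \<bar>x$j - of_int n - 1/2\<bar> < 3/8"
    unfolding Oset_def by blast
  have "{j. \<not> near (1/2) (3/8) (x$j)} \<subseteq> UNIV - J"
  proof
    fix j assume j: "j \<in> {j. \<not> near (1/2) (3/8) (x$j)}"
    have "j \<notin> J"
    proof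
      assume "j \<in> J"
      then obtain n :: int where "\<bar>x$j - of_int n - 1/2\<bar> < 3/8" using J(2) by blast
      then have "near (1/2) (3/8) (x$j)" unfolding near_def by (intro exI[of _ n]) simp
      then show False using j by simp
    qed
    then show "j \<in> UNIV - J" by simp
  qed
  then have "card {j. \<not> near (1/2) (3/8) (x$j)} \<le> card (UNIV - J)"
    by (rule card_mono[OF finite])
  also have "card (UNIV - J) = 5 - card J" by (simp add: card_Diff_subset)
  finally show "x \<in> BB'" unfolding BB'_def many_def using J(1) by simp
qed

lemma excision_cond: "closure (- AA) \<subseteq> interior BB'"
proof -
  have "closure (- AA) \<subseteq> KK" by (rule closure_minimal[OF compA_KK closed_KK])
  also have "KK \<subseteq> Oset" by (rule KK_Oset)
  also have "Oset \<subseteq> interior BB'" by (rule interior_maximal[OF Oset_BB' open_Oset])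
  finally show ?thesis .
qed

lemma I3: "hom_induced p (top_of_set AA) (AA \<inter> BB') euclidean BB' id
   \<in> iso (relative_homology_group p (top_of_set AA) (AA \<inter> BB')) (relative_homology_group p euclidean BB')"
proof -
  have "hom_induced p (subtopology euclidean (UNIV - - AA)) (BB' - - AA) (subtopology euclidean UNIV) BB' id
    \<in> iso (relative_homology_group p (subtopology euclidean (UNIV - - AA)) (BB' - - AA))
          (relative_homology_group p (subtopology euclidean UNIV) BB')"
    by (rule homology_excision_axiom) (use excision_cond in auto)
  moreover have "UNIV - - AA = AA" "BB' - - AA = AA \<inter> BB'" by auto
  ultimately show ?thesis by simp
qed

lemma Ebij: "bij_betw (hom_induced p (top_of_set AA) (AA \<inter> BB) euclidean BB id)
    (carrier (relative_homology_group p (top_of_set AA) (AA \<inter> BB)))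
    (carrier (relative_homology_group p euclidean BB))"
proof -
  define E where "E = hom_induced p (top_of_set AA) (AA \<inter> BB) euclidean BB id"
  define g where "g = hom_induced p euclidean BB euclidean BB' id"
  define h1 where "h1 = hom_induced p (top_of_set AA) (AA \<inter> BB) (top_of_set AA) (AA \<inter> BB') id"
  define h2 where "h2 = hom_induced p (top_of_set AA) (AA \<inter> BB') euclidean BB' id"
  define R where "R = relative_homology_group p (top_of_set AA) (AA \<inter> BB)"
  define Q where "Q = relative_homology_group p euclidean BB"
  define Q' where "Q' = relative_homology_group p euclidean BB'"
  have comp: "g (E x) = h2 (h1 x)" for x
  proof -
    have "g (E x) = hom_induced p (top_of_set AA) (AA \<inter> BB) euclidean BB' (id \<circ> id) x"
      unfolding g_def E_def using BB_sub by (intro hom_induced_compose') auto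
    also have "\<dots> = h2 (h1 x)"
      unfolding h1_def h2_def using BB_sub by (intro hom_induced_compose'[symmetric]) auto
    finally show ?thesis .
  qed
  have gi: "g \<in> iso Q Q'" unfolding g_def Q_def Q'_def by (rule I1)
  have hi: "h2 \<circ> h1 \<in> iso R Q'" unfolding h1_def h2_def R_def Q'_def
    by (rule iso_set_trans[OF I2 I3])
  have gb: "bij_betw g (carrier Q) (carrier Q')" using gi by (simp add: iso_def)
  have hb: "bij_betw (h2 \<circ> h1) (carrier R) (carrier Q')" using hi by (simp add: iso_def)
  have Ec: "E x \<in> carrier Q" for x unfolding E_def Q_def by (rule hom_induced_carrier)
  have "inj_on E (carrier R)"
  proof (rule inj_onI)
    fix x y assume xy: "x \<in> carrier R" "y \<in> carrier R" "E x = E y"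
    then have "(h2 \<circ> h1) x = (h2 \<circ> h1) y" using comp by (metis comp_apply)
    then show "x = y" using hb xy by (auto simp: bij_betw_def inj_on_def)
  qed
  moreover have "E ` carrier R = carrier Q"
  proof
    show "E ` carrier R \<subseteq> carrier Q" using Ec by auto
    show "carrier Q \<subseteq> E ` carrier R"
    proof
      fix y assume y: "y \<in> carrier Q"
      then have "g y \<in> carrier Q'" using gb by (auto simp: bij_betw_def)
      then have "g y \<in> (h2 \<circ> h1) ` carrier R" using hb by (simp only: bij_betw_def)
      then obtain x where x: "x \<in> carrier R" "g y = (h2 \<circ> h1) x" by (rule imageE) blast
      then have "g (E x) = g y" using comp by (simp only: comp_apply)
      then have "E x = y" using gb y Ec by (auto simp: bij_betw_def inj_on_def)
      then show "y \<in> E ` carrier R" using x by blast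
    qed
  qed
  ultimately show ?thesis unfolding E_def R_def Q_def bij_betw_def by simp
qed

lemma triv_R5: "p \<noteq> 0 \<Longrightarrow> trivial_group (homology_group p (euclidean :: (real^5) topology))"
proof -
  assume p: "p \<noteq> 0"
  have "contractible (UNIV :: (real^5) set)"
    by (rule convex_imp_contractible[OF convex_UNIV])
  then have "contractible_space (top_of_set (UNIV :: (real^5) set))"
    by (simp only: contractible_space_top_of_set)
  then have "contractible_space (euclidean :: (real^5) topology)" by (simp only: subtopology_UNIV)
  then have "trivial_group (reduced_homology_group p (euclidean :: (real^5) topology))"
    by (rule trivial_reduced_homology_group_contractible_space)
  then show ?thesis by (simp only: un_reduced_homology_group[OF p])
qed



lemma cmap_rc: "continuous_map (top_of_set (many (near c (1/4)))) (top_of_set (Zc c)) (rc c)"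
proof -
  have c1: "continuous_on (many (near c (1/4))) (rc c)" by (rule continuous_on_subset[OF cont_rc]) simp
  have i1: "rc c \<in> many (near c (1/4)) \<rightarrow> Zc c" using rc_into by blast
  show ?thesis using c1 i1 by simp
qed

theorem lemmaA2:
  shows "(\<lambda>a. (hom_induced 2 (top_of_set Mtilde) {} (top_of_set Z0) {} r0 a,
               hom_induced 2 (top_of_set Mtilde) {} (top_of_set Z1) {} r1 a))
         \<in> iso (homology_group 2 (top_of_set Mtilde))
               (homology_group 2 (top_of_set Z0) \<times>\<times> homology_group 2 (top_of_set Z1))"
proof -
  have A: "Nbhd Z0 = AA" by (simp add: Z0_eq Nbhd_eq AA_def)
  have B: "Nbhd Z1 = BB" by (simp add: Z1_eq Nbhd_eq BB_def)
  have M: "Mtilde = AA \<inter> BB" by (simp add: Mtilde_def A B)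
  define iA where "iA = hom_induced 2 (top_of_set (AA \<inter> BB)) {} (top_of_set AA) {} id"
  define iB where "iB = hom_induced 2 (top_of_set (AA \<inter> BB)) {} (top_of_set BB) {} id"
  define \<psi>0 where "\<psi>0 = hom_induced 2 (top_of_set AA) {} (top_of_set Z0) {} r0"
  define \<psi>1 where "\<psi>1 = hom_induced 2 (top_of_set BB) {} (top_of_set Z1) {} r1"
  have phi: "(\<lambda>a. (iA a, iB a)) \<in> iso (homology_group 2 (top_of_set (AA \<inter> BB)))
      (homology_group 2 (top_of_set AA) \<times>\<times> homology_group 2 (top_of_set BB))"
    unfolding iA_def iB_def
  proof (rule mv_chase)
    show "trivial_group (homology_group 2 (euclidean :: (real^5) topology))" by (rule triv_R5) simp
    show "trivial_group (homology_group 3 (euclidean :: (real^5) topology))" by (rule triv_R5) simp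
    show "inj_on (hom_induced 2 (top_of_set AA) (AA \<inter> BB) euclidean BB id)
      (carrier (relative_homology_group 2 (top_of_set AA) (AA \<inter> BB)))"
      by (rule bij_betw_imp_inj_on[OF Ebij])
    show "bij_betw (hom_induced 3 (top_of_set AA) (AA \<inter> BB) euclidean BB id)
      (carrier (relative_homology_group 3 (top_of_set AA) (AA \<inter> BB))) (carrier (relative_homology_group 3 euclidean BB))"
      by (rule Ebij)
  qed
  have psi0: "\<psi>0 \<in> iso (homology_group 2 (top_of_set AA)) (homology_group 2 (top_of_set Z0))"
    unfolding \<psi>0_def AA_def Z0_eq r0_eq by (rule iso_rc)
  have psi1: "\<psi>1 \<in> iso (homology_group 2 (top_of_set BB)) (homology_group 2 (top_of_set Z1))"
    unfolding \<psi>1_def BB_def Z1_eq r1_eq by (rule iso_rc)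
  have pp: "(\<lambda>(x,y). (\<psi>0 x, \<psi>1 y)) \<in> iso (homology_group 2 (top_of_set AA) \<times>\<times> homology_group 2 (top_of_set BB))
      (homology_group 2 (top_of_set Z0) \<times>\<times> homology_group 2 (top_of_set Z1))"
    by (rule group.DirProd_iso_set_trans[OF group_relative_homology_group psi0 psi1])
  have tot: "(\<lambda>(x,y). (\<psi>0 x, \<psi>1 y)) \<circ> (\<lambda>a. (iA a, iB a)) \<in> iso (homology_group 2 (top_of_set (AA \<inter> BB)))
      (homology_group 2 (top_of_set Z0) \<times>\<times> homology_group 2 (top_of_set Z1))"
    by (rule iso_set_trans[OF phi pp])
  have c0: "continuous_map (top_of_set AA) (top_of_set Z0) r0"
    unfolding AA_def Z0_eq r0_eq by (rule cmap_rc)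
  have c1: "continuous_map (top_of_set BB) (top_of_set Z1) r1"
    unfolding BB_def Z1_eq r1_eq by (rule cmap_rc)
  have e0: "\<psi>0 (iA a) = hom_induced 2 (top_of_set (AA \<inter> BB)) {} (top_of_set Z0) {} r0 a" for a
    unfolding \<psi>0_def iA_def using c0 by (subst hom_induced_compose') auto
  have e1: "\<psi>1 (iB a) = hom_induced 2 (top_of_set (AA \<inter> BB)) {} (top_of_set Z1) {} r1 a" for a
    unfolding \<psi>1_def iB_def using c1 by (subst hom_induced_compose') auto
  have "(\<lambda>(x,y). (\<psi>0 x, \<psi>1 y)) \<circ> (\<lambda>a. (iA a, iB a))
     = (\<lambda>a. (hom_induced 2 (top_of_set (AA \<inter> BB)) {} (top_of_set Z0) {} r0 a,
             hom_induced 2 (top_of_set (AA \<inter> BB)) {} (top_of_set Z1) {} r1 a))"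
    by (simp add: fun_eq_iff e0 e1)
  with tot show ?thesis unfolding M by simp
qed


end
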